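(* Let $\Omega\subset\mathbb{R}^n$ be a bounded Lipschitz domain, $\nu>0$, $\bm f\in \bm L^2(\Omega)$, and let $(\bm v,p)\in \bm H^1_0(\Omega)\times L^2_0(\Omega)$ be the weak solution of $$\nu(\nabla \bm v,\nabla \bm w)-(p,\mathrm{div}\,\bm w)=(\bm f,\bm w),\qquad (\mathrm{div}\,\bm v,q)=0\qquad\forall (\bm w,q)\in \bm H^1_0(\Omega)\times L^2_0(\Omega).$$ Then $$\|\nabla\bm v\|_{L^2(\Omega)}\le \frac{C_{PF}}{\nu}\|\mathbb{P}(\bm f)\|_{L^2(\Omega)}=C_{PF}\|\mathbb{P}(\Delta\bm v)\|_{L^2(\Omega)},$$ where $C_{PF}$ is the constant of the Poincaré–Friedrichs inequality $\|\bm w\|_{L^2(\Omega)}\le C_{PF}\|\nabla\bm w\|_{L^2(\Omega)}$ for $\bm w\in\bm H^1_0(\Omega)$.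
   Context: $\bm V^0:=\{\bm w\in\bm H^1_0(\Omega):\mathrm{div}\,\bm w=0\}$, $\bm L^2_\sigma(\Omega):=\{\bm w\in\bm L^2(\Omega): (\nabla q,\bm w)=0\ \forall q\in H^1(\Omega)\}$. For $\bm f\in\bm L^2(\Omega)$, $\mathbb{P}(\bm f)$ is the $\bm L^2$-orthogonal projection onto $\bm L^2_\sigma(\Omega)$ (Helmholtz–Hodge projector), so $\bm f=\nabla\alpha+\mathbb{P}(\bm f)$ with $\alpha\in H^1(\Omega)/\mathbb{R}$. For a functional $\bm g\in\bm H^{-1}(\Omega)$, $\mathbb{P}(\bm g)$ is its restriction to $\bm V^0$; here $\Delta\bm v\in\bm H^{-1}(\Omega)$ is defined by $\langle \Delta\bm v,\bm\psi\rangle=-(\nabla\bm v,\nabla\bm\psi)$, and $\mathbb{P}(\Delta\bm v)$ coincides on $\bm V^0$ with the $\bm L^2$ field $-\nu^{-1}\mathbb{P}(\bm f)$, whose $L^2$ norm is meant by $\|\mathbb{P}(\Delta\bm v)\|_{L^2(\Omega)}$. *)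

theory Defs
  imports "HOL-Analysis.Analysis"
begin

definition pd :: "'n::finite \<Rightarrow> (real^'n \<Rightarrow> 'b::real_normed_vector) \<Rightarrow> real^'n \<Rightarrow> 'b" where
  "pd j f x = frechet_derivative f (at x) (axis j 1)"

fun iter_pd :: "'n::finite list \<Rightarrow> (real^'n \<Rightarrow> 'b::real_normed_vector) \<Rightarrow> real^'n \<Rightarrow> 'b" where
  "iter_pd [] f = f"
| "iter_pd (j # js) f = pd j (iter_pd js f)"

definition smooth :: "(real^'n::finite \<Rightarrow> 'b::real_normed_vector) \<Rightarrow> bool" where
  "smooth f \<longleftrightarrow> (\<forall>js. (\<forall>x. iter_pd js f differentiable (at x)) \<and> continuous_on UNIV (iter_pd js f))"

definition test_fun :: "(real^'n::finite) set \<Rightarrow> (real^'n \<Rightarrow> 'b::real_normed_vector) \<Rightarrow> bool" where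
  "test_fun \<Omega> \<phi> \<longleftrightarrow> smooth \<phi> \<and> compact (closure {x. \<phi> x \<noteq> 0}) \<and> closure {x. \<phi> x \<noteq> 0} \<subseteq> \<Omega>"

definition jac :: "(real^'n::finite \<Rightarrow> real^'n) \<Rightarrow> real^'n \<Rightarrow> real^'n^'n" where
  "jac \<psi> x = (\<chi> i j. pd j (\<lambda>y. \<psi> y $ i) x)"

definition L2 :: "(real^'n::finite) set \<Rightarrow> (real^'n \<Rightarrow> 'b::euclidean_space) \<Rightarrow> bool" where
  "L2 \<Omega> f \<longleftrightarrow> f \<in> borel_measurable (lebesgue_on \<Omega>) \<and>
     integrable (lebesgue_on \<Omega>) (\<lambda>x. (norm (f x))\<^sup>2)"

definition L2norm :: "(real^'n::finite) set \<Rightarrow> (real^'n \<Rightarrow> 'b::euclidean_space) \<Rightarrow> real" where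
  "L2norm \<Omega> f = sqrt (\<integral>x. (norm (f x))\<^sup>2 \<partial>(lebesgue_on \<Omega>))"

definition L2_0 :: "(real^'n::finite) set \<Rightarrow> (real^'n \<Rightarrow> real) \<Rightarrow> bool" where
  "L2_0 \<Omega> q \<longleftrightarrow> L2 \<Omega> q \<and> (\<integral>x. q x \<partial>(lebesgue_on \<Omega>)) = 0"

definition weak_grad :: "(real^'n::finite) set \<Rightarrow> (real^'n \<Rightarrow> real) \<Rightarrow> (real^'n \<Rightarrow> real^'n) \<Rightarrow> bool" where
  "weak_grad \<Omega> u G \<longleftrightarrow> (\<forall>\<phi>::real^'n \<Rightarrow> real. test_fun \<Omega> \<phi> \<longrightarrow> (\<forall>j.
      (\<integral>x. u x * pd j \<phi> x \<partial>(lebesgue_on \<Omega>)) = - (\<integral>x. G x $ j * \<phi> x \<partial>(lebesgue_on \<Omega>))))"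

definition H1 :: "(real^'n::finite) set \<Rightarrow> (real^'n \<Rightarrow> real) \<Rightarrow> (real^'n \<Rightarrow> real^'n) \<Rightarrow> bool" where
  "H1 \<Omega> u G \<longleftrightarrow> L2 \<Omega> u \<and> L2 \<Omega> G \<and> weak_grad \<Omega> u G"

definition vweak_grad :: "(real^'n::finite) set \<Rightarrow> (real^'n \<Rightarrow> real^'n) \<Rightarrow> (real^'n \<Rightarrow> real^'n^'n) \<Rightarrow> bool" where
  "vweak_grad \<Omega> v D \<longleftrightarrow> (\<forall>i. weak_grad \<Omega> (\<lambda>x. v x $ i) (\<lambda>x. D x $ i))"

definition H1_0 :: "(real^'n::finite) set \<Rightarrow> (real^'n \<Rightarrow> real^'n) \<Rightarrow> (real^'n \<Rightarrow> real^'n^'n) \<Rightarrow> bool" where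
  "H1_0 \<Omega> v D \<longleftrightarrow> L2 \<Omega> v \<and> L2 \<Omega> D \<and> vweak_grad \<Omega> v D \<and>
     (\<exists>\<psi>::nat \<Rightarrow> real^'n \<Rightarrow> real^'n. (\<forall>k. test_fun \<Omega> (\<psi> k)) \<and>
        (\<lambda>k. L2norm \<Omega> (\<lambda>x. \<psi> k x - v x)) \<longlonglongrightarrow> 0 \<and>
        (\<lambda>k. L2norm \<Omega> (\<lambda>x. jac (\<psi> k) x - D x)) \<longlonglongrightarrow> 0)"

definition divg :: "(real^'n::finite \<Rightarrow> real^'n^'n) \<Rightarrow> real^'n \<Rightarrow> real" where
  "divg D x = (\<Sum>i\<in>UNIV. D x $ i $ i)"

definition V0 :: "(real^'n::finite) set \<Rightarrow> (real^'n \<Rightarrow> real^'n) \<Rightarrow> (real^'n \<Rightarrow> real^'n^'n) \<Rightarrow> bool" where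
  "V0 \<Omega> w D \<longleftrightarrow> H1_0 \<Omega> w D \<and> (AE x in lebesgue_on \<Omega>. divg D x = 0)"

definition L2_sigma :: "(real^'n::finite) set \<Rightarrow> (real^'n \<Rightarrow> real^'n) \<Rightarrow> bool" where
  "L2_sigma \<Omega> w \<longleftrightarrow> L2 \<Omega> w \<and>
     (\<forall>q G. H1 \<Omega> q G \<longrightarrow> (\<integral>x. G x \<bullet> w x \<partial>(lebesgue_on \<Omega>)) = 0)"

definition helmholtz_proj :: "(real^'n::finite) set \<Rightarrow> (real^'n \<Rightarrow> real^'n) \<Rightarrow> (real^'n \<Rightarrow> real^'n) \<Rightarrow> bool" where
  "helmholtz_proj \<Omega> f g \<longleftrightarrow> L2_sigma \<Omega> g \<and>
     (\<forall>w. L2_sigma \<Omega> w \<longrightarrow> (\<integral>x. (f x - g x) \<bullet> w x \<partial>(lebesgue_on \<Omega>)) = 0)"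

definition lipschitz_domain :: "(real^'n::finite) set \<Rightarrow> bool" where
  "lipschitz_domain \<Omega> \<longleftrightarrow> open \<Omega> \<and> connected \<Omega> \<and> \<Omega> \<noteq> {} \<and>
     (\<forall>x0\<in>frontier \<Omega>. \<exists>r>0. \<exists>e L. norm e = 1 \<and>
        (\<exists>\<gamma>::real^'n \<Rightarrow> real. L-lipschitz_on {y. y \<bullet> e = 0} \<gamma> \<and>
           \<Omega> \<inter> ball x0 r =
             {x \<in> ball x0 r. (x - x0) \<bullet> e < \<gamma> ((x - x0) - ((x - x0) \<bullet> e) *\<^sub>R e)}))"

end

theory Submission
  imports Defs "HOL-Computational_Algebra.Polynomial"
begin


fun Pk :: "nat \<Rightarrow> real poly" where
  "Pk 0 = 1"
| "Pk (Suc k) = [:0,0,1:] * (Pk k - pderiv (Pk k))"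

definition Phi :: "nat \<Rightarrow> real \<Rightarrow> real" where
  "Phi k t = (if t > 0 then poly (Pk k) (1/t) * exp (-1/t) else 0)"

lemma poly_exp_lim_top: "((\<lambda>u. poly p u * exp (-u)) \<longlongrightarrow> (0::real)) at_top"
proof -
  have "((\<lambda>u. \<Sum>i\<le>degree p. coeff p i * (u ^ i / exp u)) \<longlongrightarrow> (\<Sum>i\<le>degree p. coeff p i * 0)) at_top"
    by (intro tendsto_sum tendsto_mult tendsto_const tendsto_power_div_exp_0)
  moreover have "(\<lambda>u. \<Sum>i\<le>degree p. coeff p i * (u ^ i / exp u)) = (\<lambda>u. poly p u * exp (-u))"
    by (auto simp: poly_altdef sum_divide_distrib exp_minus field_simps)
  ultimately show ?thesis by simp
qed

lemma poly_exp_lim_right: "((\<lambda>t. poly p (1/t) * exp (-1/t)) \<longlongrightarrow> (0::real)) (at_right 0)"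
proof -
  have "((\<lambda>t. poly p (inverse t) * exp (- inverse t)) \<longlongrightarrow> (0::real)) (at_right 0)"
    by (rule filterlim_compose[OF poly_exp_lim_top filterlim_inverse_at_top_right])
  then show ?thesis by (simp add: inverse_eq_divide)
qed

lemma Phi_deriv: "(Phi k has_real_derivative Phi (Suc k) t) (at t)"
proof (cases "t > 0")
  case True
  have "((\<lambda>t. poly (Pk k) (1/t) * exp (-1/t)) has_real_derivative
      poly (pderiv (Pk k)) (1/t) * (- 1 / t^2) * exp (-1/t) + poly (Pk k) (1/t) * (exp (-1/t) * (1/t^2))) (at t)"
    using True
    by (auto intro!: derivative_eq_intros DERIV_chain2[OF poly_DERIV] simp: power2_eq_square field_simps)
  moreover have "poly (pderiv (Pk k)) (1/t) * (- 1 / t^2) * exp (-1/t) + poly (Pk k) (1/t) * (exp (-1/t) * (1/t^2))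
     = Phi (Suc k) t"
    using True by (simp add: Phi_def power2_eq_square field_simps)
  ultimately have "((\<lambda>t. poly (Pk k) (1/t) * exp (-1/t)) has_real_derivative Phi (Suc k) t) (at t)" by simp
  then show ?thesis
    by (rule has_field_derivative_transform_within_open[where S="{0<..}"]) (use True in \<open>auto simp: Phi_def\<close>)
next
  case False
  show ?thesis
  proof (cases "t < 0")
    case True
    have "((\<lambda>_. 0) has_real_derivative Phi (Suc k) t) (at t)" using True by (simp add: Phi_def)
    then show ?thesis
      by (rule has_field_derivative_transform_within_open[where S="{..<0}"]) (use True in \<open>auto simp: Phi_def\<close>)
  next
    case False
    with \<open>\<not> t > 0\<close> have t: "t = 0" by simp
    have L: "((\<lambda>y. (Phi k y - Phi k 0) / (y - 0)) \<longlongrightarrow> 0) (at_left 0)"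
    proof -
      have "\<forall>\<^sub>F y in at_left (0::real). 0 = (Phi k y - Phi k 0) / (y - 0)"
        by (auto simp: eventually_at_left_field Phi_def intro: exI[of _ "-1"])
      then show ?thesis by (rule Lim_transform_eventually[OF tendsto_const])
    qed
    have R: "((\<lambda>y. (Phi k y - Phi k 0) / (y - 0)) \<longlongrightarrow> 0) (at_right 0)"
    proof -
      have "\<forall>\<^sub>F y in at_right (0::real). poly (pCons 0 (Pk k)) (1/y) * exp (-1/y) = (Phi k y - Phi k 0) / (y - 0)"
        by (auto simp: eventually_at_right_field Phi_def intro!: exI[of _ "1"])
      then show ?thesis by (rule Lim_transform_eventually[OF poly_exp_lim_right])
    qed
    have "((\<lambda>y. (Phi k y - Phi k 0) / (y - 0)) \<longlongrightarrow> 0) (at 0)"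
      using L R by (simp add: filterlim_split_at)
    then show ?thesis unfolding t has_field_derivative_iff by (simp add: Phi_def)
  qed
qed

lemma Phi0_pos: "t > 0 \<Longrightarrow> Phi 0 t > 0" by (simp add: Phi_def)
lemma Phi_zero: "t \<le> 0 \<Longrightarrow> Phi k t = 0" by (simp add: Phi_def)
lemma Phi0_nz: "Phi 0 t \<noteq> 0 \<longleftrightarrow> t > 0" by (simp add: Phi_def)



definition Fab :: "real^'n::finite \<Rightarrow> real \<Rightarrow> ('n \<Rightarrow> nat) \<Rightarrow> ('n \<Rightarrow> nat) \<Rightarrow> real^'n \<Rightarrow> real" where
  "Fab c r a b x = (\<Prod>i\<in>UNIV. Phi (a i) (r + (x$i - c$i)) * Phi (b i) (r - (x$i - c$i)))"

definition fac :: "real \<Rightarrow> real \<Rightarrow> nat \<Rightarrow> nat \<Rightarrow> real \<Rightarrow> real" where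
  "fac ci r a b s = Phi a (r + (s - ci)) * Phi b (r - (s - ci))"

definition dfac :: "real \<Rightarrow> real \<Rightarrow> nat \<Rightarrow> nat \<Rightarrow> real \<Rightarrow> real" where
  "dfac ci r a b s = Phi (Suc a) (r + (s - ci)) * Phi b (r - (s - ci)) - Phi a (r + (s - ci)) * Phi (Suc b) (r - (s - ci))"

lemma fac_deriv: "(fac ci r a b has_real_derivative dfac ci r a b s) (at s)"
proof -
  have A: "((\<lambda>s. Phi a (r + (s - ci))) has_real_derivative Phi (Suc a) (r + (s - ci)) * 1) (at s)"
    by (rule DERIV_chain2[OF Phi_deriv]) (auto intro!: derivative_eq_intros)
  have B: "((\<lambda>s. Phi b (r - (s - ci))) has_real_derivative Phi (Suc b) (r - (s - ci)) * (-1)) (at s)"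
    by (rule DERIV_chain2[OF Phi_deriv]) (auto intro!: derivative_eq_intros)
  show ?thesis using DERIV_mult[OF A B] unfolding fac_def dfac_def by (simp add: algebra_simps)
qed

lemma fac_nth_deriv:
  "((\<lambda>x::real^'n::finite. fac (c$i) r a b (x$i)) has_derivative (\<lambda>h. dfac (c$i) r a b (x$i) * h$i)) (at x)"
proof -
  have "((\<lambda>x::real^'n. x$i) has_derivative (\<lambda>h. h$i)) (at x)"
    by (rule bounded_linear_imp_has_derivative[OF bounded_linear_vec_nth])
  from has_derivative_compose[OF this fac_deriv[unfolded has_field_derivative_def]]
  show ?thesis by simp
qed

lemma Fab_eq: "Fab c r a b x = (\<Prod>i\<in>UNIV. fac (c$i) r (a i) (b i) (x$i))"
  by (simp add: Fab_def fac_def)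

lemma Fab_has_derivative:
  "(Fab c r a b has_derivative (\<lambda>h. \<Sum>i\<in>UNIV. dfac (c$i) r (a i) (b i) (x$i) * h$i * (\<Prod>j\<in>UNIV - {i}. fac (c$j) r (a j) (b j) (x$j)))) (at x)"
  unfolding Fab_eq[abs_def]
  by (rule has_derivative_prod) (rule fac_nth_deriv)

lemma Fab_differentiable: "Fab c r a b differentiable (at x)"
  unfolding differentiable_def using Fab_has_derivative by blast

lemma pd_Fab: "pd j (Fab c r a b) x = Fab c r (a(j := Suc (a j))) b x - Fab c r a (b(j := Suc (b j))) x"
proof -
  have "pd j (Fab c r a b) x = (\<Sum>i\<in>UNIV. dfac (c$i) r (a i) (b i) (x$i) * axis j 1 $ i * (\<Prod>j\<in>UNIV - {i}. fac (c$j) r (a j) (b j) (x$j)))"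
    unfolding pd_def frechet_derivative_at[OF Fab_has_derivative, symmetric] by simp
  also have "\<dots> = dfac (c$j) r (a j) (b j) (x$j) * (\<Prod>k\<in>UNIV - {j}. fac (c$k) r (a k) (b k) (x$k))"
    by (subst sum.remove[of _ j]) (auto simp: axis_def)
  also have "\<dots> = Fab c r (a(j := Suc (a j))) b x - Fab c r a (b(j := Suc (b j))) x"
  proof -
    have A: "Fab c r (a(j := Suc (a j))) b x = fac (c$j) r (Suc (a j)) (b j) (x$j) * (\<Prod>k\<in>UNIV - {j}. fac (c$k) r (a k) (b k) (x$k))"
      unfolding Fab_eq by (subst prod.remove[of _ j]) (auto intro!: prod.cong)
    have B: "Fab c r a (b(j := Suc (b j))) x = fac (c$j) r (a j) (Suc (b j)) (x$j) * (\<Prod>k\<in>UNIV - {j}. fac (c$k) r (a k) (b k) (x$k))"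
      unfolding Fab_eq by (subst prod.remove[of _ j]) (auto intro!: prod.cong)
    show ?thesis unfolding A B by (simp add: dfac_def fac_def algebra_simps)
  qed
  finally show ?thesis .
qed

inductive_set Sm :: "real^'n::finite \<Rightarrow> real \<Rightarrow> (real^'n \<Rightarrow> real) set" for c r where
  base: "(\<lambda>x. \<kappa> * Fab c r a b x) \<in> Sm c r"
| add: "F \<in> Sm c r \<Longrightarrow> G \<in> Sm c r \<Longrightarrow> (\<lambda>x. F x + G x) \<in> Sm c r"

lemma pd_add:
  assumes "F differentiable (at x)" "G differentiable (at x)"
  shows "pd j (\<lambda>x. F x + G x) x = pd j F x + pd j G x"
proof -
  have "((\<lambda>x. F x + G x) has_derivative (\<lambda>h. frechet_derivative F (at x) h + frechet_derivative G (at x) h)) (at x)"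
    using assms by (intro has_derivative_add) (auto simp: frechet_derivative_works)
  from frechet_derivative_at[OF this, symmetric] show ?thesis unfolding pd_def by simp
qed

lemma pd_cmult:
  fixes F :: "real^'n::finite \<Rightarrow> real"
  assumes "F differentiable (at x)"
  shows "pd j (\<lambda>x. k * F x) x = k * pd j F x"
proof -
  have "((\<lambda>x. k * F x) has_derivative (\<lambda>h. k * frechet_derivative F (at x) h)) (at x)"
    by (rule has_derivative_mult_right) (use assms in \<open>simp add: frechet_derivative_works\<close>)
  from frechet_derivative_at[OF this, symmetric] show ?thesis unfolding pd_def by simp
qed

lemma Sm_props: "F \<in> Sm c r \<Longrightarrow> (\<forall>x. F differentiable (at x)) \<and> (\<forall>j. pd j F \<in> Sm c r)"
proof (induction rule: Sm.induct)
  case (base \<kappa> a b)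
  have d: "\<And>x. (\<lambda>x. \<kappa> * Fab c r a b x) differentiable (at x)"
    using has_derivative_mult_right[OF Fab_has_derivative] unfolding differentiable_def by blast
  have "pd j (\<lambda>x. \<kappa> * Fab c r a b x) = (\<lambda>x. (\<lambda>x. \<kappa> * Fab c r (a(j := Suc (a j))) b x) x + (\<lambda>x. (-\<kappa>) * Fab c r a (b(j := Suc (b j))) x) x)" for j
    by (rule ext, subst pd_cmult[OF Fab_differentiable]) (simp add: pd_Fab algebra_simps)
  then have "pd j (\<lambda>x. \<kappa> * Fab c r a b x) \<in> Sm c r" for j
    by (simp only:) (rule Sm.add[OF Sm.base Sm.base])
  then show ?case using d by blast
next
  case (add F G)
  have "pd j (\<lambda>x. F x + G x) = (\<lambda>x. pd j F x + pd j G x)" for j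
    using add by (intro ext pd_add) auto
  then show ?case using add by (auto intro: Sm.intros)
qed

lemma Sm_smooth: assumes "F \<in> Sm c r" shows "smooth F"
proof -
  have "iter_pd js F \<in> Sm c r" for js
  proof (induction js)
    case (Cons j js)
    then show ?case using Sm_props[of "iter_pd js F" c r] by simp
  qed (simp add: assms)
  then have d: "\<And>js x. iter_pd js F differentiable (at x)"
    using Sm_props by blast
  then have "\<And>js. continuous_on UNIV (iter_pd js F)"
    by (intro differentiable_imp_continuous_on) (simp add: differentiable_on_def differentiable_at_withinI)
  then show ?thesis unfolding smooth_def using d by blast
qed



lemma dir_deriv:
  fixes F :: "real^'n::finite \<Rightarrow> real"
  assumes "\<forall>x. F differentiable (at x)"
  shows "((\<lambda>t. F (x + t *\<^sub>R e)) has_real_derivative frechet_derivative F (at (x + t *\<^sub>R e)) e) (at t)"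
proof -
  have d1: "((\<lambda>t. x + t *\<^sub>R e) has_derivative (\<lambda>s. s *\<^sub>R e)) (at t)"
    by (auto intro!: derivative_eq_intros)
  have d2: "(F has_derivative frechet_derivative F (at (x + t *\<^sub>R e))) (at (x + t *\<^sub>R e))"
    using assms frechet_derivative_works by blast
  have "((\<lambda>t. F (x + t *\<^sub>R e)) has_derivative (\<lambda>s. frechet_derivative F (at (x + t *\<^sub>R e)) (s *\<^sub>R e))) (at t)"
    by (rule has_derivative_compose[OF d1 d2])
  moreover have "(\<lambda>s. frechet_derivative F (at (x + t *\<^sub>R e)) (s *\<^sub>R e)) = (*) (frechet_derivative F (at (x + t *\<^sub>R e)) e)"
    using linear_scale[OF has_derivative_linear[OF d2]] by (auto simp: mult.commute)
  ultimately show ?thesis unfolding has_field_derivative_def by simp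
qed

lemma pd_zero_outside:
  fixes F :: "real^'n::finite \<Rightarrow> 'b::real_normed_vector"
  assumes "closed K" "\<forall>x. x \<notin> K \<longrightarrow> F x = 0" "y \<notin> K"
  shows "pd j F y = 0"
proof -
  have "((\<lambda>_. 0) has_derivative (\<lambda>_. 0)) (at y)" by simp
  then have "(F has_derivative (\<lambda>_. 0)) (at y)"
    by (rule has_derivative_transform_within_open[where s="- K"]) (use assms in auto)
  from frechet_derivative_at[OF this, symmetric] show ?thesis by (simp add: pd_def)
qed

lemma integrable_cont_supp:
  fixes G :: "real^'n::finite \<Rightarrow> real"
  assumes "continuous_on UNIV G" "compact K" "\<forall>x. x \<notin> K \<longrightarrow> G x = 0"
  shows "integrable lborel G"
proof -
  have "bounded (G ` K)"
    using assms by (intro compact_imp_bounded compact_continuous_image) (auto intro: continuous_on_subset)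
  then obtain B where B: "\<And>x. x \<in> K \<Longrightarrow> norm (G x) \<le> B"
    by (auto simp: bounded_iff)
  have "integrable lborel (\<lambda>x. B * indicator K x)"
    using assms emeasure_bounded_finite[OF compact_imp_bounded[OF assms(2)]]
    by (intro integrable_mult_right integrable_real_indicator) (auto simp: borel_compact)
  then show ?thesis
  proof (rule Bochner_Integration.integrable_bound)
    show "G \<in> borel_measurable lborel"
      using assms by (simp add: borel_measurable_continuous_onI)
    show "AE x in lborel. norm (G x) \<le> norm (B * indicator K x)"
      using B assms by (auto simp: indicator_def intro!: always_eventually) (smt (verit) norm_ge_zero)
  qed
qed

lemma ftc_lborel:
  fixes F :: "real^'n::finite \<Rightarrow> real"
  assumes diff: "\<forall>x. F differentiable (at x)"
    and cont: "continuous_on UNIV (pd j F)"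
    and K: "compact K" and supp: "\<forall>x. x \<notin> K \<longrightarrow> F x = 0"
  shows "integral\<^sup>L lborel (pd j F) = 0"
proof -
  define e :: "real^'n" where "e = axis j 1"
  have ne: "norm e = 1" by (simp add: e_def)
  define K1 where "K1 = {x + y |x y. x \<in> K \<and> y \<in> cball (0::real^'n) 1}"
  have K1: "compact K1" unfolding K1_def by (rule compact_sums[OF K]) simp
  have KK1: "K \<subseteq> K1" unfolding K1_def by force
  have contF: "continuous_on UNIV F"
    using diff by (intro differentiable_imp_continuous_on) (simp add: differentiable_on_def differentiable_at_withinI)
  have pd0: "pd j F y = 0" if "y \<notin> K" for y
    using pd_zero_outside[of K F y j] K supp that by (auto simp: compact_imp_closed)
  have "bounded (pd j F ` K)"
    using K cont by (intro compact_imp_bounded compact_continuous_image) (auto intro: continuous_on_subset)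
  then obtain M0 where M0: "\<And>y. y \<in> K \<Longrightarrow> norm (pd j F y) \<le> M0"
    by (auto simp: bounded_iff)
  define M where "M = max M0 0"
  have M: "\<bar>pd j F y\<bar> \<le> M" for y
    using M0[of y] pd0[of y] by (cases "y \<in> K") (auto simp: M_def)
  define h :: "nat \<Rightarrow> real" where "h k = inverse (real (Suc k))" for k
  have h: "0 < h k" "h k \<le> 1" for k by (auto simp: h_def field_simps)
  define s where "s k x = (F (x + h k *\<^sub>R e) - F x) / h k" for k x
  have g_deriv: "((\<lambda>t. F (x + t *\<^sub>R e)) has_real_derivative pd j F (x + t *\<^sub>R e)) (at t)" for x t
    using dir_deriv[OF diff, of x e t] by (simp add: pd_def e_def)
  have shift_out: "F (x + t *\<^sub>R e) = 0" if "x \<notin> K1" "\<bar>t\<bar> \<le> 1" for x t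
  proof -
    have "x + t *\<^sub>R e \<notin> K"
    proof
      assume "x + t *\<^sub>R e \<in> K"
      moreover have "- (t *\<^sub>R e) \<in> cball 0 1" using that ne by simp
      ultimately have "(x + t *\<^sub>R e) + - (t *\<^sub>R e) \<in> K1" unfolding K1_def by blast
      then show False using that by simp
    qed
    then show ?thesis using supp by blast
  qed
  have intF: "integrable lborel F"
    by (rule integrable_cont_supp[OF contF K supp])
  have cF: "continuous_on UNIV (\<lambda>x. F (x + c))" for c
    by (rule continuous_on_compose2[OF contF]) (auto intro!: continuous_intros)
  have intFs: "integrable lborel (\<lambda>x. F (x + t *\<^sub>R e))" if "\<bar>t\<bar> \<le> 1" for t
    by (rule integrable_cont_supp[OF cF K1]) (use shift_out that in auto)
  have transl: "integral\<^sup>L lborel (\<lambda>x. F (x + c)) = integral\<^sup>L lborel F" for c :: "real^'n"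
  proof -
    have "integral\<^sup>L (distr lborel borel ((+) c)) F = integral\<^sup>L lborel (\<lambda>x. F (c + x))"
      by (rule integral_distr) (auto simp: borel_measurable_continuous_onI contF)
    then show ?thesis by (simp add: lborel_distr_plus add.commute)
  qed
  have int_s: "integral\<^sup>L lborel (s k) = 0" for k
  proof -
    have "integral\<^sup>L lborel (s k) = (integral\<^sup>L lborel (\<lambda>x. F (x + h k *\<^sub>R e)) - integral\<^sup>L lborel F) / h k"
      unfolding s_def using intFs[of "h k"] intF h[of k]
      by (simp add: Bochner_Integration.integral_diff)
    then show ?thesis by (simp add: transl)
  qed
  have hlim: "filterlim h (at 0) sequentially"
    unfolding h_def by (rule filterlim_atI[OF LIMSEQ_inverse_real_of_nat]) auto
  have lim: "(\<lambda>k. s k x) \<longlonglongrightarrow> pd j F x" for x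
  proof -
    have "((\<lambda>t. (F (x + (0 + t) *\<^sub>R e) - F (x + 0 *\<^sub>R e)) / t) \<longlongrightarrow> pd j F (x + 0 *\<^sub>R e)) (at 0)"
      using g_deriv[of x 0] unfolding DERIV_def by simp
    then have "((\<lambda>t. (F (x + t *\<^sub>R e) - F x) / t) \<longlongrightarrow> pd j F x) (at 0)" by simp
    from filterlim_compose[OF this hlim] show ?thesis by (simp add: s_def)
  qed
  have bound: "\<bar>s k x\<bar> \<le> M * indicator K1 x" for k x
  proof (cases "x \<in> K1")
    case True
    obtain z where z: "0 < z" "z < h k" "F (x + h k *\<^sub>R e) - F (x + 0 *\<^sub>R e) = (h k - 0) * pd j F (x + z *\<^sub>R e)"
      using MVT2[OF h(1)[of k], of "\<lambda>t. F (x + t *\<^sub>R e)" "\<lambda>t. pd j F (x + t *\<^sub>R e)"] g_deriv by blast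
    then have "s k x = pd j F (x + z *\<^sub>R e)" using h[of k] by (simp add: s_def)
    then show ?thesis using True M by simp
  next
    case False
    then have "x \<notin> K" using KK1 by blast
    then show ?thesis using False shift_out[OF False, of "h k"] h[of k] supp by (simp add: s_def)
  qed
  have "(\<lambda>k. integral\<^sup>L lborel (s k)) \<longlonglongrightarrow> integral\<^sup>L lborel (pd j F)"
  proof (rule integral_dominated_convergence[where w="\<lambda>x. M * indicator K1 x"])
    show "pd j F \<in> borel_measurable lborel" using cont by (simp add: borel_measurable_continuous_onI)
    show "s k \<in> borel_measurable lborel" for k
    proof -
      have "continuous_on UNIV (\<lambda>x. (F (x + h k *\<^sub>R e) - F x) / h k)"
        using h[of k] by (intro continuous_intros cF contF) auto
      then show ?thesis by (simp add: s_def borel_measurable_continuous_onI)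
    qed
    show "integrable lborel (\<lambda>x. M * indicator K1 x)"
      using K1 emeasure_bounded_finite[OF compact_imp_bounded[OF K1]]
    by (intro integrable_mult_right integrable_real_indicator) (auto simp: borel_compact)
    show "AE x in lborel. (\<lambda>k. s k x) \<longlonglongrightarrow> pd j F x" using lim by simp
    show "AE x in lborel. norm (s k x) \<le> M * indicator K1 x" for k using bound by simp
  qed
  then show ?thesis unfolding int_s using LIMSEQ_unique tendsto_const by blast
qed

lemma ftc_Omega:
  fixes F :: "real^'n::finite \<Rightarrow> real"
  assumes diff: "\<forall>x. F differentiable (at x)"
    and cont: "continuous_on UNIV (pd j F)"
    and K: "compact K" and supp: "\<forall>x. x \<notin> K \<longrightarrow> F x = 0"
    and O: "open \<Omega>" "K \<subseteq> \<Omega>"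
  shows "integral\<^sup>L (lebesgue_on \<Omega>) (pd j F) = 0"
proof -
  have pd0: "pd j F y = 0" if "y \<notin> K" for y
    using pd_zero_outside[of K F y j] K supp that by (auto simp: compact_imp_closed)
  have Om: "\<Omega> \<in> sets lebesgue" using O by (simp add: borel_open sets_completionI_sets)
  have "integral\<^sup>L (lebesgue_on \<Omega>) (pd j F) = integral\<^sup>L lebesgue (\<lambda>x. indicator \<Omega> x *\<^sub>R pd j F x)"
    by (rule integral_restrict_space) (use Om in simp)
  also have "(\<lambda>x. indicator \<Omega> x *\<^sub>R pd j F x) = pd j F"
  proof (rule ext)
    fix x show "indicator \<Omega> x *\<^sub>R pd j F x = pd j F x"
      using pd0[of x] O by (cases "x \<in> \<Omega>") auto
  qed
  also have "integral\<^sup>L lebesgue (pd j F) = integral\<^sup>L lborel (pd j F)"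
    by (rule integral_completion) (use cont in \<open>simp add: borel_measurable_continuous_onI\<close>)
  also have "\<dots> = 0" by (rule ftc_lborel[OF diff cont K supp])
  finally show ?thesis .
qed



lemma ab_le: "0 \<le> (a::real) \<Longrightarrow> 0 \<le> b \<Longrightarrow> a * b \<le> a\<^sup>2 + b\<^sup>2"
proof -
  assume "0 \<le> a" "0 \<le> b"
  have "0 \<le> (a - b)\<^sup>2" by simp
  then have "0 \<le> a * a - 2 * (a * b) + b * b" by (simp add: power2_eq_square algebra_simps)
  moreover have "0 \<le> a * b" using \<open>0 \<le> a\<close> \<open>0 \<le> b\<close> by simp
  ultimately show ?thesis by (simp add: power2_eq_square)
qed
lemma sq_sum_le: "(a + b)\<^sup>2 \<le> 2 * (a::real)\<^sup>2 + 2 * b\<^sup>2"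
proof -
  have "0 \<le> (a - b)\<^sup>2" by simp
  then show ?thesis by (simp add: power2_eq_square algebra_simps)
qed

lemma cs_num:
  fixes I A B :: real
  assumes A: "A \<ge> 0" and B: "B \<ge> 0" and H: "\<And>t. t > 0 \<Longrightarrow> \<bar>I\<bar> \<le> (t * A + B / t) / 2"
  shows "\<bar>I\<bar> \<le> sqrt A * sqrt B"
proof -
  consider "A > 0" "B > 0" | "A = 0" | "B = 0" using A B by linarith
  then show ?thesis
  proof cases
    case 1
    define t where "t = sqrt B / sqrt A"
    have t: "t > 0" using 1 by (simp add: t_def)
    have sa: "sqrt A > 0" "sqrt B > 0" using 1 by auto
    have aux1: "b / a * (a * a) = b * a" if "a > 0" for a b :: real using that by (simp add: field_simps)
    have aux2: "(b * b) / (b / a) = b * a" if "a > 0" "b > 0" for a b :: real using that by (simp add: field_simps)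
    have e1: "A = sqrt A * sqrt A" "B = sqrt B * sqrt B" using A B by simp_all
    have "t * A = sqrt B * sqrt A" unfolding t_def using aux1[OF sa(1), of "sqrt B"] e1(1) by metis
    moreover have "B / t = sqrt B * sqrt A" unfolding t_def using aux2[OF sa] e1(2) by metis
    ultimately show ?thesis using H[OF t] by (simp add: mult.commute)
  next
    case 2
    show ?thesis
    proof (rule ccontr)
      assume "\<not> ?thesis"
      then have I: "\<bar>I\<bar> > 0" using 2 by simp
      define t where "t = B / \<bar>I\<bar> + 1"
      have t: "t > 0" using I B by (simp add: t_def add_nonneg_pos)
      have "\<bar>I\<bar> \<le> B / t / 2" using H[OF t] 2 by simp
      moreover have "B / t / 2 < \<bar>I\<bar>"
      proof -
        have "B / t = B * \<bar>I\<bar> / (B + \<bar>I\<bar>)" using I unfolding t_def by (simp add: field_simps)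
        also have "\<dots> \<le> \<bar>I\<bar>" using I B by (simp add: divide_le_eq algebra_simps)
        finally show ?thesis using I by simp
      qed
      ultimately show False by simp
    qed
  next
    case 3
    show ?thesis
    proof (rule ccontr)
      assume "\<not> ?thesis"
      then have I: "\<bar>I\<bar> > 0" using 3 by simp
      define t where "t = \<bar>I\<bar> / (A + 1)"
      have t: "t > 0" using I A by (simp add: t_def)
      have "\<bar>I\<bar> \<le> t * A / 2" using H[OF t] 3 by simp
      moreover have "t * A < \<bar>I\<bar> * 2"
      proof -
        have "t * A = \<bar>I\<bar> * (A / (A + 1))" unfolding t_def by simp
        also have "\<dots> \<le> \<bar>I\<bar>" using I A by (simp add: divide_le_eq algebra_simps)
        finally show ?thesis using I by simp
      qed
      ultimately show False by simp
    qed
  qed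
qed

lemma L2_inner_int:
  fixes u w :: "real^'n::finite \<Rightarrow> 'b::euclidean_space"
  assumes "L2 \<Omega> u" "L2 \<Omega> w"
  shows "integrable (lebesgue_on \<Omega>) (\<lambda>x. u x \<bullet> w x)"
proof -
  have "integrable (lebesgue_on \<Omega>) (\<lambda>x. (norm (u x))\<^sup>2 + (norm (w x))\<^sup>2)"
    using assms by (auto simp: L2_def)
  then show ?thesis
  proof (rule Bochner_Integration.integrable_bound)
    show "(\<lambda>x. u x \<bullet> w x) \<in> borel_measurable (lebesgue_on \<Omega>)"
      using assms by (intro borel_measurable_inner) (auto simp: L2_def)
    show "AE x in lebesgue_on \<Omega>. norm (u x \<bullet> w x) \<le> norm ((norm (u x))\<^sup>2 + (norm (w x))\<^sup>2)"
    proof (intro always_eventually allI)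
      fix x
      have "\<bar>u x \<bullet> w x\<bar> \<le> norm (u x) * norm (w x)" by (rule Cauchy_Schwarz_ineq2)
      also have "\<dots> \<le> (norm (u x))\<^sup>2 + (norm (w x))\<^sup>2"
        by (rule ab_le) simp_all
      finally show "norm (u x \<bullet> w x) \<le> norm ((norm (u x))\<^sup>2 + (norm (w x))\<^sup>2)" by simp
    qed
  qed
qed

lemma L2_CS:
  fixes u w :: "real^'n::finite \<Rightarrow> 'b::euclidean_space"
  assumes u: "L2 \<Omega> u" and w: "L2 \<Omega> w"
  shows "\<bar>\<integral>x. u x \<bullet> w x \<partial>(lebesgue_on \<Omega>)\<bar> \<le> L2norm \<Omega> u * L2norm \<Omega> w"
proof -
  define A where "A = (\<integral>x. (norm (u x))\<^sup>2 \<partial>(lebesgue_on \<Omega>))"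
  define B where "B = (\<integral>x. (norm (w x))\<^sup>2 \<partial>(lebesgue_on \<Omega>))"
  have iu: "integrable (lebesgue_on \<Omega>) (\<lambda>x. (norm (u x))\<^sup>2)" and iw: "integrable (lebesgue_on \<Omega>) (\<lambda>x. (norm (w x))\<^sup>2)"
    using u w by (auto simp: L2_def)
  have A: "A \<ge> 0" unfolding A_def by simp
  have B: "B \<ge> 0" unfolding B_def by simp
  have "\<bar>\<integral>x. u x \<bullet> w x \<partial>(lebesgue_on \<Omega>)\<bar> \<le> (t * A + B / t) / 2" if t: "t > 0" for t
  proof -
    have "\<bar>\<integral>x. u x \<bullet> w x \<partial>(lebesgue_on \<Omega>)\<bar> \<le> (\<integral>x. \<bar>u x \<bullet> w x\<bar> \<partial>(lebesgue_on \<Omega>))"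
      by (rule integral_abs_bound)
    also have "\<dots> \<le> (\<integral>x. (t * (norm (u x))\<^sup>2 + (norm (w x))\<^sup>2 / t) / 2 \<partial>(lebesgue_on \<Omega>))"
    proof (rule integral_mono)
      show "integrable (lebesgue_on \<Omega>) (\<lambda>x. \<bar>u x \<bullet> w x\<bar>)"
        using L2_inner_int[OF u w] by (rule integrable_abs)
      show "integrable (lebesgue_on \<Omega>) (\<lambda>x. (t * (norm (u x))\<^sup>2 + (norm (w x))\<^sup>2 / t) / 2)"
        using iu iw by (intro integrable_divide integrable_add integrable_mult_right) auto
      fix x
      have "\<bar>u x \<bullet> w x\<bar> \<le> norm (u x) * norm (w x)" by (rule Cauchy_Schwarz_ineq2)
      also have "\<dots> \<le> (t * (norm (u x))\<^sup>2 + (norm (w x))\<^sup>2 / t) / 2"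
      proof -
        have "0 \<le> (t * norm (u x) - norm (w x))\<^sup>2" by simp
        then have "2 * t * (norm (u x) * norm (w x)) \<le> t * (t * (norm (u x))\<^sup>2) + (norm (w x))\<^sup>2"
          by (simp add: power2_eq_square algebra_simps)
        then show ?thesis using t by (simp add: field_simps power2_eq_square)
      qed
      finally show "\<bar>u x \<bullet> w x\<bar> \<le> (t * (norm (u x))\<^sup>2 + (norm (w x))\<^sup>2 / t) / 2" .
    qed
    also have "\<dots> = (t * A + B / t) / 2"
      using iu iw unfolding A_def B_def by simp
    finally show ?thesis .
  qed
  then have "\<bar>\<integral>x. u x \<bullet> w x \<partial>(lebesgue_on \<Omega>)\<bar> \<le> sqrt A * sqrt B"
    by (intro cs_num A B) auto
  then show ?thesis unfolding L2norm_def A_def B_def .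
qed

lemma L2_diff:
  fixes u w :: "real^'n::finite \<Rightarrow> 'b::euclidean_space"
  assumes u: "L2 \<Omega> u" and w: "L2 \<Omega> w"
  shows "L2 \<Omega> (\<lambda>x. u x - w x)"
proof -
  have "integrable (lebesgue_on \<Omega>) (\<lambda>x. 2 * (norm (u x))\<^sup>2 + 2 * (norm (w x))\<^sup>2)"
    using u w by (auto simp: L2_def)
  then have "integrable (lebesgue_on \<Omega>) (\<lambda>x. (norm (u x - w x))\<^sup>2)"
  proof (rule Bochner_Integration.integrable_bound)
    show "(\<lambda>x. (norm (u x - w x))\<^sup>2) \<in> borel_measurable (lebesgue_on \<Omega>)"
      using u w by (auto simp: L2_def)
    show "AE x in lebesgue_on \<Omega>. norm ((norm (u x - w x))\<^sup>2) \<le> norm (2 * (norm (u x))\<^sup>2 + 2 * (norm (w x))\<^sup>2)"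
    proof (intro always_eventually allI)
      fix x
      have n: "norm (u x - w x) \<le> norm (u x) + norm (w x)" by (rule norm_triangle_ineq4)
      have "(norm (u x - w x))\<^sup>2 \<le> (norm (u x) + norm (w x))\<^sup>2"
        using n by (intro power_mono) auto
      also have "\<dots> \<le> 2 * (norm (u x))\<^sup>2 + 2 * (norm (w x))\<^sup>2"
        by (rule sq_sum_le)
      finally show "norm ((norm (u x - w x))\<^sup>2) \<le> norm (2 * (norm (u x))\<^sup>2 + 2 * (norm (w x))\<^sup>2)" by simp
    qed
  qed
  then show ?thesis using u w by (auto simp: L2_def)
qed

lemma L2_scale:
  fixes u :: "real^'n::finite \<Rightarrow> 'b::euclidean_space"
  assumes u: "L2 \<Omega> u"
  shows "L2 \<Omega> (\<lambda>x. c *\<^sub>R u x)" and "L2norm \<Omega> (\<lambda>x. c *\<^sub>R u x) = \<bar>c\<bar> * L2norm \<Omega> u"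
proof -
  have e: "(\<lambda>x. (norm (c *\<^sub>R u x))\<^sup>2) = (\<lambda>x. c\<^sup>2 * (norm (u x))\<^sup>2)"
    by (simp add: power_mult_distrib)
  show "L2 \<Omega> (\<lambda>x. c *\<^sub>R u x)" using u unfolding L2_def e by auto
  show "L2norm \<Omega> (\<lambda>x. c *\<^sub>R u x) = \<bar>c\<bar> * L2norm \<Omega> u"
    unfolding L2norm_def e by (simp add: real_sqrt_mult)
qed

lemma L2_cont:
  fixes f :: "real^'n::finite \<Rightarrow> 'b::euclidean_space"
  assumes O: "bounded \<Omega>" "open \<Omega>" and c: "continuous_on UNIV f" and B: "\<And>x. norm (f x) \<le> B"
  shows "L2 \<Omega> f"
proof -
  have fin: "finite_measure (lebesgue_on \<Omega>)"
    by (rule finite_measure_lebesgue_on[OF lmeasurable_open[OF O]])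
  have m: "f \<in> borel_measurable (lebesgue_on \<Omega>)"
    by (intro measurable_restrict_space1 measurable_completion) (simp add: borel_measurable_continuous_onI c)
  have "integrable (lebesgue_on \<Omega>) (\<lambda>x. (norm (f x))\<^sup>2)"
  proof (rule finite_measure.integrable_const_bound[OF fin])
    show "AE x in lebesgue_on \<Omega>. norm ((norm (f x))\<^sup>2) \<le> B\<^sup>2"
      using B by (intro always_eventually allI) (simp add: power_mono)
    show "(\<lambda>x. (norm (f x))\<^sup>2) \<in> borel_measurable (lebesgue_on \<Omega>)" using m by simp
  qed
  then show ?thesis using m by (simp add: L2_def)
qed

lemma L2_lim:
  fixes a b :: "real^'n::finite \<Rightarrow> 'b::euclidean_space"
  assumes a: "L2 \<Omega> a" and bk: "\<And>k. L2 \<Omega> (bs k)" and b: "L2 \<Omega> b"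
    and lim: "(\<lambda>k. L2norm \<Omega> (\<lambda>x. bs k x - b x)) \<longlonglongrightarrow> 0"
  shows "(\<lambda>k. \<integral>x. a x \<bullet> bs k x \<partial>(lebesgue_on \<Omega>)) \<longlonglongrightarrow> (\<integral>x. a x \<bullet> b x \<partial>(lebesgue_on \<Omega>))"
proof -
  have eq: "(\<integral>x. a x \<bullet> bs k x \<partial>(lebesgue_on \<Omega>)) - (\<integral>x. a x \<bullet> b x \<partial>(lebesgue_on \<Omega>))
      = (\<integral>x. a x \<bullet> (bs k x - b x) \<partial>(lebesgue_on \<Omega>))" for k
    using L2_inner_int[OF a bk[of k]] L2_inner_int[OF a b]
    by (simp add: inner_diff_right Bochner_Integration.integral_diff)
  have "(\<lambda>k. (\<integral>x. a x \<bullet> bs k x \<partial>(lebesgue_on \<Omega>)) - (\<integral>x. a x \<bullet> b x \<partial>(lebesgue_on \<Omega>))) \<longlonglongrightarrow> 0"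
  proof (rule Lim_null_comparison)
    show "\<forall>\<^sub>F k in sequentially. norm ((\<integral>x. a x \<bullet> bs k x \<partial>(lebesgue_on \<Omega>)) - (\<integral>x. a x \<bullet> b x \<partial>(lebesgue_on \<Omega>)))
        \<le> L2norm \<Omega> a * L2norm \<Omega> (\<lambda>x. bs k x - b x)"
      unfolding eq using L2_CS[OF a L2_diff[OF bk b]] by (intro always_eventually allI) simp
    show "(\<lambda>k. L2norm \<Omega> a * L2norm \<Omega> (\<lambda>x. bs k x - b x)) \<longlonglongrightarrow> 0"
      using tendsto_mult_right_zero[OF lim] by simp
  qed
  from tendsto_add[OF this tendsto_const[of "\<integral>x. a x \<bullet> b x \<partial>(lebesgue_on \<Omega>)"]]
  show ?thesis by simp
qed



lemma pd_comp:
  fixes G :: "real^'n::finite \<Rightarrow> real^'m::finite"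
  assumes "G differentiable (at x)"
  shows "pd j (\<lambda>y. G y $ i) x = pd j G x $ i"
proof -
  have "((\<lambda>y. G y $ i) has_derivative (\<lambda>h. frechet_derivative G (at x) h $ i)) (at x)"
    using assms by (intro bounded_linear.has_derivative[OF bounded_linear_vec_nth]) (simp add: frechet_derivative_works)
  from frechet_derivative_at[OF this, symmetric] show ?thesis by (simp add: pd_def)
qed

lemma smooth_diff: "smooth f \<Longrightarrow> f differentiable (at x)"
  unfolding smooth_def by (metis iter_pd.simps(1))

lemma smooth_pd_cont: "smooth f \<Longrightarrow> continuous_on UNIV (pd j f)"
  unfolding smooth_def by (metis iter_pd.simps(1) iter_pd.simps(2))

lemma smooth_cont: "smooth f \<Longrightarrow> continuous_on UNIV f"
  unfolding smooth_def by (metis iter_pd.simps(1))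

lemma smooth_comp:
  fixes \<psi> :: "real^'n::finite \<Rightarrow> real^'m::finite"
  assumes "smooth \<psi>"
  shows "smooth (\<lambda>x. \<psi> x $ i)"
proof -
  have e: "iter_pd js (\<lambda>x. \<psi> x $ i) = (\<lambda>x. iter_pd js \<psi> x $ i)" for js
  proof (induction js)
    case (Cons j js)
    have "pd j (\<lambda>x. iter_pd js \<psi> x $ i) x = pd j (iter_pd js \<psi>) x $ i" for x
      using assms by (intro pd_comp) (simp add: smooth_def)
    then show ?case using Cons by auto
  qed simp
  have "(\<lambda>x. iter_pd js \<psi> x $ i) differentiable (at x)" for js x
  proof -
    have "(iter_pd js \<psi> has_derivative frechet_derivative (iter_pd js \<psi>) (at x)) (at x)"
      using assms by (simp add: smooth_def frechet_derivative_works)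
    from bounded_linear.has_derivative[OF bounded_linear_vec_nth this, of i]
    show ?thesis by (auto simp: differentiable_def)
  qed
  moreover have "continuous_on UNIV (\<lambda>x. iter_pd js \<psi> x $ i)" for js
    using assms by (intro continuous_on_component) (simp add: smooth_def)
  ultimately show ?thesis unfolding smooth_def e by blast
qed

lemma test_fun_supp:
  assumes "test_fun \<Omega> \<phi>"
  shows "compact (closure {x. \<phi> x \<noteq> 0})" "\<forall>x. x \<notin> closure {x. \<phi> x \<noteq> 0} \<longrightarrow> \<phi> x = 0"
    "closure {x. \<phi> x \<noteq> 0} \<subseteq> \<Omega>"
proof -
  show "compact (closure {x. \<phi> x \<noteq> 0})" "closure {x. \<phi> x \<noteq> 0} \<subseteq> \<Omega>"
    using assms unfolding test_fun_def by auto
  show "\<forall>x. x \<notin> closure {x. \<phi> x \<noteq> 0} \<longrightarrow> \<phi> x = 0"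
    using closure_subset[of "{x. \<phi> x \<noteq> 0}"] by blast
qed

lemma test_comp:
  fixes \<psi> :: "real^'n::finite \<Rightarrow> real^'m::finite"
  assumes "test_fun \<Omega> \<psi>"
  shows "test_fun \<Omega> (\<lambda>x. \<psi> x $ i)"
proof -
  have s: "closure {x. \<psi> x $ i \<noteq> 0} \<subseteq> closure {x. \<psi> x \<noteq> 0}"
    by (rule closure_mono) auto
  have "compact (closure {x. \<psi> x \<noteq> 0} \<inter> closure {x. \<psi> x $ i \<noteq> 0})"
    using assms by (intro compact_Int_closed) (auto simp: test_fun_def)
  moreover have "closure {x. \<psi> x \<noteq> 0} \<inter> closure {x. \<psi> x $ i \<noteq> 0} = closure {x. \<psi> x $ i \<noteq> 0}"
    using s by blast
  ultimately show ?thesis using assms s smooth_comp unfolding test_fun_def by auto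
qed

lemma bnd_supp:
  fixes f :: "real^'n::finite \<Rightarrow> 'b::real_normed_vector"
  assumes "continuous_on UNIV f" "compact K" "\<forall>x. x \<notin> K \<longrightarrow> f x = 0"
  shows "\<exists>B. \<forall>x. norm (f x) \<le> B"
proof -
  have "bounded (f ` K)"
    using assms by (intro compact_imp_bounded compact_continuous_image) (auto intro: continuous_on_subset)
  then obtain B where B: "\<And>x. x \<in> K \<Longrightarrow> norm (f x) \<le> B" by (auto simp: bounded_iff)
  show ?thesis
  proof (intro exI allI)
    fix x show "norm (f x) \<le> max B 0" using B[of x] assms(3) by (cases "x \<in> K") auto
  qed
qed

lemma L2_cs:
  fixes f :: "real^'n::finite \<Rightarrow> 'b::euclidean_space"
  assumes O: "bounded \<Omega>" "open \<Omega>" and "continuous_on UNIV f" "compact K" "\<forall>x. x \<notin> K \<longrightarrow> f x = 0"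
  shows "L2 \<Omega> f"
  using bnd_supp[OF assms(3-5)] L2_cont[OF O assms(3)] by blast

lemma divg_inner: "divg D x = mat 1 \<bullet> D x"
proof -
  have "(mat 1 $ i) \<bullet> (D x $ i) = D x $ i $ i" for i
  proof -
    have "(mat 1 $ i) \<bullet> (D x $ i) = (\<Sum>j\<in>UNIV. (if i = j then 1 else 0) * D x $ i $ j)"
      by (simp add: inner_vec_def mat_def)
    also have "\<dots> = (\<Sum>j\<in>UNIV. if i = j then D x $ i $ j else 0)" by (rule sum.cong) auto
    also have "\<dots> = D x $ i $ i" by simp
    finally show ?thesis .
  qed
  then show ?thesis by (simp add: divg_def inner_vec_def[of "mat 1"])
qed

lemma L2_smul_const:
  fixes q :: "real^'n::finite \<Rightarrow> real" and M :: "'b::euclidean_space"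
  assumes q: "L2 \<Omega> q"
  shows "L2 \<Omega> (\<lambda>x. q x *\<^sub>R M)"
proof -
  have e: "(\<lambda>x. (norm (q x *\<^sub>R M))\<^sup>2) = (\<lambda>x. (norm M)\<^sup>2 * (norm (q x))\<^sup>2)"
    by (simp add: power_mult_distrib mult.commute)
  show ?thesis using q unfolding L2_def e by auto
qed

lemma L2_inner_const:
  fixes u :: "real^'n::finite \<Rightarrow> 'b::euclidean_space"
  assumes u: "L2 \<Omega> u"
  shows "L2 \<Omega> (\<lambda>x. M \<bullet> u x)"
proof -
  have "integrable (lebesgue_on \<Omega>) (\<lambda>x. (norm M)\<^sup>2 * (norm (u x))\<^sup>2)"
    using u by (auto simp: L2_def)
  then have "integrable (lebesgue_on \<Omega>) (\<lambda>x. (norm (M \<bullet> u x))\<^sup>2)"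
  proof (rule Bochner_Integration.integrable_bound)
    show "(\<lambda>x. (norm (M \<bullet> u x))\<^sup>2) \<in> borel_measurable (lebesgue_on \<Omega>)"
      using u by (auto simp: L2_def)
    show "AE x in lebesgue_on \<Omega>. norm ((norm (M \<bullet> u x))\<^sup>2) \<le> norm ((norm M)\<^sup>2 * (norm (u x))\<^sup>2)"
    proof (intro always_eventually allI)
      fix x
      have "\<bar>M \<bullet> u x\<bar> \<le> norm M * norm (u x)" by (rule Cauchy_Schwarz_ineq2)
      then have "\<bar>M \<bullet> u x\<bar>\<^sup>2 \<le> (norm M * norm (u x))\<^sup>2" by (intro power_mono) auto
      then show "norm ((norm (M \<bullet> u x))\<^sup>2) \<le> norm ((norm M)\<^sup>2 * (norm (u x))\<^sup>2)"
        by (simp add: power_mult_distrib)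
    qed
  qed
  moreover have "(\<lambda>x. M \<bullet> u x) \<in> borel_measurable (lebesgue_on \<Omega>)"
    using u by (intro borel_measurable_inner) (auto simp: L2_def)
  ultimately show ?thesis by (simp add: L2_def)
qed

lemma test_fun_facts:
  fixes \<phi> :: "real^'n::finite \<Rightarrow> real"
  assumes O: "bounded \<Omega>" "open \<Omega>" and t: "test_fun \<Omega> \<phi>"
  shows "L2 \<Omega> \<phi>" "L2 \<Omega> (pd j \<phi>)" "continuous_on UNIV (pd j \<phi>)"
    "integral\<^sup>L (lebesgue_on \<Omega>) (pd j \<phi>) = 0"
proof -
  let ?K = "closure {x. \<phi> x \<noteq> 0}"
  have sm: "smooth \<phi>" using t by (simp add: test_fun_def)
  note K = test_fun_supp[OF t]
  show "continuous_on UNIV (pd j \<phi>)" using smooth_pd_cont[OF sm] .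
  show "L2 \<Omega> \<phi>" by (rule L2_cs[OF O smooth_cont[OF sm] K(1,2)])
  have "\<forall>x. x \<notin> ?K \<longrightarrow> pd j \<phi> x = 0"
  proof (intro allI impI)
    fix x assume "x \<notin> ?K"
    show "pd j \<phi> x = 0" by (rule pd_zero_outside[OF _ K(2) \<open>x \<notin> ?K\<close>]) simp
  qed
  then show "L2 \<Omega> (pd j \<phi>)" by (rule L2_cs[OF O smooth_pd_cont[OF sm] K(1)])
  show "integral\<^sup>L (lebesgue_on \<Omega>) (pd j \<phi>) = 0"
  proof (rule ftc_Omega[OF _ smooth_pd_cont[OF sm] K(1) K(2) O(2) K(3)])
    show "\<forall>x. \<phi> differentiable at x" using smooth_diff[OF sm] by blast
  qed
qed

lemma test_vec_facts:
  fixes \<psi> :: "real^'n::finite \<Rightarrow> real^'n"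
  assumes O: "bounded \<Omega>" "open \<Omega>" and t: "test_fun \<Omega> \<psi>"
  shows "L2 \<Omega> \<psi>" "L2 \<Omega> (jac \<psi>)"
proof -
  let ?K = "closure {x. \<psi> x \<noteq> 0}"
  have sm: "smooth \<psi>" using t by (simp add: test_fun_def)
  note K = test_fun_supp[OF t]
  show "L2 \<Omega> \<psi>" by (rule L2_cs[OF O smooth_cont[OF sm] K(1,2)])
  have jc: "jac \<psi> x = (\<chi> i j. pd j \<psi> x $ i)" for x
    unfolding jac_def using pd_comp[OF smooth_diff[OF sm]] by simp
  have "continuous_on UNIV (jac \<psi>)"
    unfolding jc
    by (intro continuous_on_vec_lambda) (rule continuous_on_component[OF smooth_pd_cont[OF sm]])
  moreover have "\<forall>x. x \<notin> ?K \<longrightarrow> jac \<psi> x = 0"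
  proof (intro allI impI)
    fix x assume "x \<notin> ?K"
    have "pd j \<psi> x = 0" for j by (rule pd_zero_outside[OF _ K(2) \<open>x \<notin> ?K\<close>]) simp
    then show "jac \<psi> x = 0" unfolding jc by (simp add: vec_eq_iff)
  qed
  ultimately show "L2 \<Omega> (jac \<psi>)" by (rule L2_cs[OF O _ K(1)])
qed

lemma ibp:
  fixes w :: "real^'n::finite \<Rightarrow> real^'n" and Dw :: "real^'n \<Rightarrow> real^'n^'n"
  assumes O: "bounded \<Omega>" "open \<Omega>" and w: "H1_0 \<Omega> w Dw" and q: "H1 \<Omega> q G"
  shows "(\<integral>x. G x \<bullet> w x \<partial>(lebesgue_on \<Omega>)) = - (\<integral>x. q x * divg Dw x \<partial>(lebesgue_on \<Omega>))"
proof -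
  obtain \<psi> where t: "\<And>k. test_fun \<Omega> (\<psi> k)"
    and l1: "(\<lambda>k. L2norm \<Omega> (\<lambda>x. \<psi> k x - w x)) \<longlonglongrightarrow> 0"
    and l2: "(\<lambda>k. L2norm \<Omega> (\<lambda>x. jac (\<psi> k) x - Dw x)) \<longlonglongrightarrow> 0"
    using w unfolding H1_0_def by blast
  have Lw: "L2 \<Omega> w" "L2 \<Omega> Dw" using w by (auto simp: H1_0_def)
  have Lq: "L2 \<Omega> q" "L2 \<Omega> G" and wg: "weak_grad \<Omega> q G" using q by (auto simp: H1_def)
  have Lqm: "L2 \<Omega> (\<lambda>x. q x *\<^sub>R mat 1)" by (rule L2_smul_const[OF Lq(1)])
  have eqk: "(\<integral>x. G x \<bullet> \<psi> k x \<partial>(lebesgue_on \<Omega>)) = - (\<integral>x. (q x *\<^sub>R mat 1) \<bullet> jac (\<psi> k) x \<partial>(lebesgue_on \<Omega>))" for k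
  proof -
    have tc: "test_fun \<Omega> (\<lambda>x. \<psi> k x $ i)" for i by (rule test_comp[OF t])
    have sm: "smooth (\<psi> k)" using t by (simp add: test_fun_def)
    have L2ax: "L2 \<Omega> (\<lambda>x. \<psi> k x $ i *\<^sub>R axis i (1::real))" for i
    proof -
      have "L2 \<Omega> (\<lambda>x. \<psi> k x $ i)" using test_fun_facts(1)[OF O tc] .
      from L2_smul_const[OF this] show ?thesis .
    qed
    have wgi: "(\<integral>x. q x * pd i (\<lambda>y. \<psi> k y $ i) x \<partial>(lebesgue_on \<Omega>)) = - (\<integral>x. G x $ i * \<psi> k x $ i \<partial>(lebesgue_on \<Omega>))" for i
      using wg tc[of i] unfolding weak_grad_def by blast
    have ax: "G x \<bullet> (c *\<^sub>R axis i (1::real)) = G x $ i * c" for x c i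
      by (simp add: inner_axis inner_real_def mult.commute)
    have fe: "(\<lambda>x. (\<Sum>i\<in>UNIV. q x * pd i (\<lambda>y. \<psi> k y $ i) x)) = (\<lambda>x. (q x *\<^sub>R mat 1) \<bullet> jac (\<psi> k) x)"
    proof (rule ext)
      fix x
      have h: "(q x *\<^sub>R mat 1) \<bullet> jac (\<psi> k) x = q x * divg (jac (\<psi> k)) x" by (simp add: divg_inner)
      have d: "divg (jac (\<psi> k)) x = (\<Sum>i\<in>UNIV. pd i (\<lambda>y. \<psi> k y $ i) x)"
        unfolding divg_def jac_def vec_lambda_beta by (rule refl)
      show "(\<Sum>i\<in>UNIV. q x * pd i (\<lambda>y. \<psi> k y $ i) x) = (q x *\<^sub>R mat 1) \<bullet> jac (\<psi> k) x"
        unfolding h d by (rule sum_distrib_left[symmetric])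
    qed
    have "(\<integral>x. G x \<bullet> \<psi> k x \<partial>(lebesgue_on \<Omega>)) = (\<integral>x. (\<Sum>i\<in>UNIV. G x \<bullet> (\<psi> k x $ i *\<^sub>R axis i 1)) \<partial>(lebesgue_on \<Omega>))"
      by (simp only: ax) (simp add: inner_vec_def inner_real_def)
    also have "\<dots> = (\<Sum>i\<in>UNIV. (\<integral>x. G x \<bullet> (\<psi> k x $ i *\<^sub>R axis i 1) \<partial>(lebesgue_on \<Omega>)))"
      by (rule Bochner_Integration.integral_sum[where f="\<lambda>i x. G x \<bullet> (\<psi> k x $ i *\<^sub>R axis i 1)"]) (rule L2_inner_int[OF Lq(2) L2ax])
    also have "\<dots> = (\<Sum>i\<in>UNIV. (\<integral>x. G x $ i * \<psi> k x $ i \<partial>(lebesgue_on \<Omega>)))"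
      by (simp only: ax)
    also have "\<dots> = (\<Sum>i\<in>UNIV. - (\<integral>x. q x * pd i (\<lambda>y. \<psi> k y $ i) x \<partial>(lebesgue_on \<Omega>)))"
      using wgi by simp
    also have "\<dots> = - (\<integral>x. (\<Sum>i\<in>UNIV. q x * pd i (\<lambda>y. \<psi> k y $ i) x) \<partial>(lebesgue_on \<Omega>))"
    proof -
      have "integrable (lebesgue_on \<Omega>) (\<lambda>x. q x * pd i (\<lambda>y. \<psi> k y $ i) x)" for i
        using L2_inner_int[OF Lq(1) test_fun_facts(2)[OF O tc]] by (simp add: inner_real_def)
      then show ?thesis by (simp add: Bochner_Integration.integral_sum sum_negf)
    qed
    also have "\<dots> = - (\<integral>x. (q x *\<^sub>R mat 1) \<bullet> jac (\<psi> k) x \<partial>(lebesgue_on \<Omega>))"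
      by (simp only: fe)
    finally show ?thesis .
  qed
  have lim1: "(\<lambda>k. \<integral>x. G x \<bullet> \<psi> k x \<partial>(lebesgue_on \<Omega>)) \<longlonglongrightarrow> (\<integral>x. G x \<bullet> w x \<partial>(lebesgue_on \<Omega>))"
    by (rule L2_lim[OF Lq(2) test_vec_facts(1)[OF O t] Lw(1) l1])
  have lim2: "(\<lambda>k. \<integral>x. (q x *\<^sub>R mat 1) \<bullet> jac (\<psi> k) x \<partial>(lebesgue_on \<Omega>)) \<longlonglongrightarrow> (\<integral>x. (q x *\<^sub>R mat 1) \<bullet> Dw x \<partial>(lebesgue_on \<Omega>))"
    by (rule L2_lim[OF Lqm test_vec_facts(2)[OF O t] Lw(2) l2])
  have "(\<lambda>k. \<integral>x. G x \<bullet> \<psi> k x \<partial>(lebesgue_on \<Omega>)) \<longlonglongrightarrow> - (\<integral>x. (q x *\<^sub>R mat 1) \<bullet> Dw x \<partial>(lebesgue_on \<Omega>))"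
    unfolding eqk by (rule tendsto_minus[OF lim2])
  with lim1 have "(\<integral>x. G x \<bullet> w x \<partial>(lebesgue_on \<Omega>)) = - (\<integral>x. (q x *\<^sub>R mat 1) \<bullet> Dw x \<partial>(lebesgue_on \<Omega>))"
    by (rule LIMSEQ_unique)
  also have "\<dots> = - (\<integral>x. q x * divg Dw x \<partial>(lebesgue_on \<Omega>))"
    by (simp add: divg_inner)
  finally show ?thesis .
qed



lemma Fab00_supp:
  assumes "Fab c r (\<lambda>_. 0) (\<lambda>_. 0) x \<noteq> 0"
  shows "\<bar>x$i - c$i\<bar> < r"
proof -
  have "Phi 0 (r + (x$i - c$i)) * Phi 0 (r - (x$i - c$i)) \<noteq> 0"
    using assms unfolding Fab_def by (simp add: prod_zero_iff)
  then have "r + (x$i - c$i) > 0" "r - (x$i - c$i) > 0" by (auto simp: Phi0_nz)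
  then show ?thesis by linarith
qed

lemma Fab00_pos: "r > 0 \<Longrightarrow> Fab c r (\<lambda>_. 0) (\<lambda>_. 0) c > 0"
  unfolding Fab_def by (intro prod_pos) (simp add: Phi0_pos)

lemma pd_scaleR:
  fixes G :: "real^'n::finite \<Rightarrow> real" and e :: "'b::real_normed_vector"
  assumes "G differentiable (at x)"
  shows "pd j (\<lambda>y. G y *\<^sub>R e) x = pd j G x *\<^sub>R e"
proof -
  have "((\<lambda>y. G y *\<^sub>R e) has_derivative (\<lambda>h. frechet_derivative G (at x) h *\<^sub>R e)) (at x)"
    by (rule has_derivative_scaleR_left) (use assms in \<open>simp add: frechet_derivative_works\<close>)
  from frechet_derivative_at[OF this, symmetric] show ?thesis by (simp add: pd_def)
qed

lemma pd_mult:
  fixes F G :: "real^'n::finite \<Rightarrow> real"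
  assumes "F differentiable (at x)" "G differentiable (at x)"
  shows "pd j (\<lambda>y. F y * G y) x = F x * pd j G x + pd j F x * G x"
proof -
  have "((\<lambda>y. F y * G y) has_derivative (\<lambda>h. F x * frechet_derivative G (at x) h + frechet_derivative F (at x) h * G x)) (at x)"
    by (rule has_derivative_mult) (use assms in \<open>simp_all add: frechet_derivative_works\<close>)
  from frechet_derivative_at[OF this, symmetric] show ?thesis by (simp add: pd_def)
qed

lemma mult_differentiable:
  fixes F G :: "real^'n::finite \<Rightarrow> real"
  assumes "F differentiable (at x)" "G differentiable (at x)"
  shows "(\<lambda>y. F y * G y) differentiable (at x)"
proof -
  have "((\<lambda>y. F y * G y) has_derivative (\<lambda>h. F x * frechet_derivative G (at x) h + frechet_derivative F (at x) h * G x)) (at x)"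
    by (rule has_derivative_mult) (use assms in \<open>simp_all add: frechet_derivative_works\<close>)
  then show ?thesis by (auto simp: differentiable_def)
qed

lemma smooth_scaleR:
  fixes B :: "real^'n::finite \<Rightarrow> real" and e :: "real^'n"
  assumes sm: "smooth B"
  shows "smooth (\<lambda>y. B y *\<^sub>R e)" "\<And>js. iter_pd js (\<lambda>y. B y *\<^sub>R e) = (\<lambda>y. iter_pd js B y *\<^sub>R e)"
proof -
  show it: "iter_pd js (\<lambda>y. B y *\<^sub>R e) = (\<lambda>y. iter_pd js B y *\<^sub>R e)" for js
  proof (induction js)
    case (Cons j js)
    have "pd j (\<lambda>y. iter_pd js B y *\<^sub>R e) x = pd j (iter_pd js B) x *\<^sub>R e" for x
      using sm by (intro pd_scaleR) (simp add: smooth_def)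
    then show ?case using Cons by auto
  qed simp
  have d: "(\<lambda>y. iter_pd js B y *\<^sub>R e) differentiable (at x)" for js x
  proof -
    have "((\<lambda>y. iter_pd js B y *\<^sub>R e) has_derivative (\<lambda>h. frechet_derivative (iter_pd js B) (at x) h *\<^sub>R e)) (at x)"
      by (rule has_derivative_scaleR_left) (use sm in \<open>simp add: smooth_def frechet_derivative_works\<close>)
    then show ?thesis by (auto simp: differentiable_def)
  qed
  have c: "continuous_on UNIV (\<lambda>y. iter_pd js B y *\<^sub>R e)" for js
    using sm unfolding smooth_def by (intro continuous_on_scaleR continuous_on_const) auto
  show "smooth (\<lambda>y. B y *\<^sub>R e)" unfolding smooth_def it using d c by blast
qed

lemma nonzero_H1_0:
  fixes \<Omega> :: "(real^'n::finite) set"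
  assumes O: "bounded \<Omega>" "open \<Omega>" and ne: "\<Omega> \<noteq> {}"
  shows "\<exists>w Dw. H1_0 \<Omega> w Dw \<and> L2norm \<Omega> w > 0"
proof -
  obtain c where c: "c \<in> \<Omega>" using ne by blast
  obtain \<epsilon> where \<epsilon>: "\<epsilon> > 0" "ball c \<epsilon> \<subseteq> \<Omega>" using O(2) c open_contains_ball by blast
  define r where "r = \<epsilon> / (2 * real CARD('n))"
  have r: "r > 0" using \<epsilon> by (simp add: r_def)
  define B where "B = (\<lambda>x. 1 * Fab c r (\<lambda>_. 0) (\<lambda>_. 0) x)"
  have BS: "B \<in> Sm c r" unfolding B_def by (rule Sm.base)
  have smB: "smooth B" by (rule Sm_smooth[OF BS])
  have dB: "\<And>x. B differentiable (at x)" using smB smooth_diff by blast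
  define K where "K = cbox (c - (\<chi> i. r)) (c + (\<chi> i. r))"
  have Kc: "compact K" "closed K" unfolding K_def by (simp_all add: compact_cbox closed_cbox)
  have KO: "K \<subseteq> \<Omega>"
  proof
    fix x assume "x \<in> K"
    then have "\<forall>i. c $ i - r \<le> x $ i \<and> x $ i \<le> c $ i + r" by (simp add: K_def mem_box_cart)
    then have "c $ i - r \<le> x $ i \<and> x $ i \<le> c $ i + r" for i by blast
    then have xi: "\<bar>(x - c)$i\<bar> \<le> r" for i by (simp add: abs_le_iff) (smt (verit))
    have "norm (x - c) \<le> (\<Sum>i\<in>UNIV. \<bar>(x - c)$i\<bar>)" by (rule norm_le_l1_cart)
    also have "\<dots> \<le> of_nat (card (UNIV :: 'n set)) * r" by (rule sum_bounded_above) (rule xi)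
    also have "\<dots> = \<epsilon> / 2" unfolding r_def by simp
    also have "\<dots> < \<epsilon>" using \<epsilon> by simp
    finally show "x \<in> \<Omega>" using \<epsilon>(2) by (auto simp: dist_norm norm_minus_commute)
  qed
  have Bsupp: "\<forall>x. x \<notin> K \<longrightarrow> B x = 0"
  proof (intro allI impI)
    fix x assume "x \<notin> K"
    show "B x = 0"
    proof (rule ccontr)
      assume "B x \<noteq> 0"
      then have "\<bar>x$i - c$i\<bar> < r" for i using Fab00_supp[of c r x i] by (simp add: B_def)
      then have "c $ i - r \<le> x $ i \<and> x $ i \<le> c $ i + r" for i
        by (smt (verit))
      then have "x \<in> K" by (simp add: K_def mem_box_cart)
      then show False using \<open>x \<notin> K\<close> by blast
    qed
  qed
  have pdB0: "\<forall>x. x \<notin> K \<longrightarrow> pd j B x = 0" for j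
  proof (intro allI impI)
    fix x assume "x \<notin> K"
    show "pd j B x = 0" by (rule pd_zero_outside[OF Kc(2) Bsupp \<open>x \<notin> K\<close>])
  qed
  define e :: "real^'n" where "e = axis undefined 1"
  have e0: "e \<noteq> 0" by (simp add: e_def axis_eq_0_iff)
  define w where "w = (\<lambda>y. B y *\<^sub>R e)"
  have smw: "smooth w" unfolding w_def by (rule smooth_scaleR(1)[OF smB])
  have dw: "\<And>x. w differentiable (at x)" using smw smooth_diff by blast
  have cw: "continuous_on UNIV w" using smw smooth_cont by blast
  have wsupp: "\<forall>x. x \<notin> K \<longrightarrow> w x = 0" using Bsupp by (simp add: w_def)
  have clK: "closure {x. w x \<noteq> 0} \<subseteq> K"
    using wsupp Kc(2) by (intro closure_minimal) auto
  have tw: "test_fun \<Omega> w"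
  proof -
    have "compact (K \<inter> closure {x. w x \<noteq> 0})" using Kc by (intro compact_Int_closed) auto
    moreover have "K \<inter> closure {x. w x \<noteq> 0} = closure {x. w x \<noteq> 0}" using clK by blast
    ultimately show ?thesis unfolding test_fun_def using smw clK KO by auto
  qed
  have jc: "jac w x = (\<chi> i j. pd j B x * e $ i)" for x
  proof -
    have "pd j (\<lambda>y. w y $ i) x = pd j B x * e $ i" for i j
      using pd_comp[OF dw, of j i] pd_scaleR[OF dB, of j e] by (simp add: w_def)
    then show ?thesis unfolding jac_def by simp
  qed
  have cpdB: "continuous_on UNIV (pd j B)" for j by (rule smooth_pd_cont[OF smB])
  have Lw: "L2 \<Omega> w" by (rule L2_cs[OF O cw Kc(1) wsupp])
  have LB: "L2 \<Omega> B" by (rule L2_cs[OF O smooth_cont[OF smB] Kc(1) Bsupp])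
  have LpdB: "L2 \<Omega> (pd j B)" for j by (rule L2_cs[OF O cpdB Kc(1) pdB0])
  have cjac: "continuous_on UNIV (jac w)"
    unfolding jc by (intro continuous_on_vec_lambda continuous_on_mult_right cpdB)
  have jsupp: "\<forall>x. x \<notin> K \<longrightarrow> jac w x = 0"
    using pdB0 unfolding jc by (simp add: vec_eq_iff)
  have Ljac: "L2 \<Omega> (jac w)" by (rule L2_cs[OF O cjac Kc(1) jsupp])
  have key: "(\<integral>x. B x * pd j \<phi> x \<partial>(lebesgue_on \<Omega>)) = - (\<integral>x. pd j B x * \<phi> x \<partial>(lebesgue_on \<Omega>))"
    if t: "test_fun \<Omega> \<phi>" for \<phi> j
  proof -
    have sp: "smooth \<phi>" using t by (simp add: test_fun_def)
    have dp: "\<And>x. \<phi> differentiable (at x)" using sp smooth_diff by blast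
    define F where "F = (\<lambda>y. B y * \<phi> y)"
    have dF: "\<forall>x. F differentiable (at x)" unfolding F_def using mult_differentiable[OF dB dp] by blast
    have pdF: "pd j F = (\<lambda>x. B x * pd j \<phi> x + pd j B x * \<phi> x)"
      unfolding F_def using pd_mult[OF dB dp] by blast
    have cF: "continuous_on UNIV (pd j F)" unfolding pdF
      using smooth_cont[OF smB] smooth_cont[OF sp] smooth_pd_cont[OF sp] cpdB
      by (intro continuous_on_add continuous_on_mult) auto
    have Fsupp: "\<forall>x. x \<notin> K \<longrightarrow> F x = 0" using Bsupp by (simp add: F_def)
    have "integral\<^sup>L (lebesgue_on \<Omega>) (pd j F) = 0"
      by (rule ftc_Omega[OF dF cF Kc(1) Fsupp O(2) KO])
    moreover have i1: "integrable (lebesgue_on \<Omega>) (\<lambda>x. B x * pd j \<phi> x)"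
      using L2_inner_int[OF LB test_fun_facts(2)[OF O t]] by (simp add: inner_real_def)
    moreover have i2: "integrable (lebesgue_on \<Omega>) (\<lambda>x. pd j B x * \<phi> x)"
      using L2_inner_int[OF LpdB test_fun_facts(1)[OF O t]] by (simp add: inner_real_def)
    ultimately show ?thesis unfolding pdF by (simp add: Bochner_Integration.integral_add)
  qed
  have H: "H1_0 \<Omega> w (jac w)"
    unfolding H1_0_def
  proof (intro conjI)
    show "L2 \<Omega> w" by (rule Lw)
    show "L2 \<Omega> (jac w)" by (rule Ljac)
    show "vweak_grad \<Omega> w (jac w)"
      unfolding vweak_grad_def weak_grad_def
    proof (intro allI impI)
      fix i :: 'n and \<phi> :: "real^'n \<Rightarrow> real" and j :: 'n
      assume t: "test_fun \<Omega> \<phi>"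
      have "(\<integral>x. w x $ i * pd j \<phi> x \<partial>(lebesgue_on \<Omega>)) = (\<integral>x. (B x * pd j \<phi> x) * e $ i \<partial>(lebesgue_on \<Omega>))"
        by (rule Bochner_Integration.integral_cong) (simp_all add: w_def)
      also have "\<dots> = (\<integral>x. B x * pd j \<phi> x \<partial>(lebesgue_on \<Omega>)) * e $ i"
        by (rule integral_mult_left_zero)
      also have "\<dots> = - (\<integral>x. pd j B x * \<phi> x \<partial>(lebesgue_on \<Omega>)) * e $ i"
        using key[OF t] by simp
      also have "\<dots> = - ((\<integral>x. (pd j B x * \<phi> x) * e $ i \<partial>(lebesgue_on \<Omega>)))"
        by (simp add: integral_mult_left_zero)
      also have "(\<integral>x. (pd j B x * \<phi> x) * e $ i \<partial>(lebesgue_on \<Omega>)) = (\<integral>x. jac w x $ i $ j * \<phi> x \<partial>(lebesgue_on \<Omega>))"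
        by (rule Bochner_Integration.integral_cong) (simp_all add: jc)
      finally show "(\<integral>x. w x $ i * pd j \<phi> x \<partial>(lebesgue_on \<Omega>)) = - (\<integral>x. jac w x $ i $ j * \<phi> x \<partial>(lebesgue_on \<Omega>))" .
    qed
    show "\<exists>\<psi>::nat \<Rightarrow> real^'n \<Rightarrow> real^'n. (\<forall>k. test_fun \<Omega> (\<psi> k)) \<and>
        (\<lambda>k. L2norm \<Omega> (\<lambda>x. \<psi> k x - w x)) \<longlonglongrightarrow> 0 \<and>
        (\<lambda>k. L2norm \<Omega> (\<lambda>x. jac (\<psi> k) x - jac w x)) \<longlonglongrightarrow> 0"
      by (rule exI[of _ "\<lambda>_. w"]) (simp add: tw L2norm_def)
  qed
  have pos: "L2norm \<Omega> w > 0"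
  proof (rule ccontr)
    assume "\<not> L2norm \<Omega> w > 0"
    then have "(\<integral>x. (norm (w x))\<^sup>2 \<partial>(lebesgue_on \<Omega>)) = 0"
      unfolding L2norm_def by (metis integral_nonneg_AE AE_I2 zero_le_power2 real_sqrt_gt_0_iff order_neq_le_trans)
    then have "AE x in lebesgue_on \<Omega>. (norm (w x))\<^sup>2 = 0"
      using Lw by (subst integral_nonneg_eq_0_iff_AE[symmetric]) (auto simp: L2_def)
    then have "AE x in lebesgue_on \<Omega>. w x = 0" by simp
    moreover have Om: "\<Omega> \<in> sets lebesgue" using O by (simp add: borel_open sets_completionI_sets)
    ultimately have "AE x in lebesgue. x \<in> \<Omega> \<longrightarrow> w x = 0"
      by (subst (asm) AE_restrict_space_iff) auto
    define U where "U = \<Omega> \<inter> {x. w x \<noteq> 0}"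
    have oU: "open U" unfolding U_def using O(2) cw by (intro open_Int open_Collect_neq continuous_on_const) auto
    have "w c \<noteq> 0" using Fab00_pos[OF r, of c] e0 by (simp add: w_def B_def)
    then have Une: "U \<noteq> {}" using c by (auto simp: U_def)
    have UL: "U \<in> sets lebesgue" using oU by (simp add: borel_open sets_completionI_sets)
    have "AE x in lebesgue. x \<notin> U" using \<open>AE x in lebesgue. x \<in> \<Omega> \<longrightarrow> w x = 0\<close>
      by eventually_elim (auto simp: U_def)
    then have "emeasure lebesgue U = 0"
      using AE_iff_measurable[OF UL, of "\<lambda>x. x \<notin> U"] by simp
    then have "negligible U" using UL by (simp add: negligible_iff_emeasure0)
    then show False using open_not_negligible[OF oU Une] by blast
  qed
  show ?thesis using H pos by blast
qed



lemma L2norm_nonneg: "L2norm \<Omega> f \<ge> 0"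
  unfolding L2norm_def by (rule real_sqrt_ge_zero) (rule integral_nonneg_AE, simp)

lemma L2norm_sq: "(L2norm \<Omega> f)\<^sup>2 = (\<integral>x. (norm (f x))\<^sup>2 \<partial>(lebesgue_on \<Omega>))"
  unfolding L2norm_def by (rule real_sqrt_pow2) (rule integral_nonneg_AE, simp)

lemma H1_one:
  fixes \<Omega> :: "(real^'n::finite) set"
  assumes O: "bounded \<Omega>" "open \<Omega>"
  shows "H1 \<Omega> (\<lambda>_. 1) (\<lambda>_. 0)"
  unfolding H1_def
proof (intro conjI)
  show "L2 \<Omega> (\<lambda>_. 1::real)" by (rule L2_cont[OF O, of _ 1]) auto
  show "L2 \<Omega> (\<lambda>_. 0::real^'n)" by (rule L2_cont[OF O, of _ 0]) auto
  show "weak_grad \<Omega> (\<lambda>_. 1) (\<lambda>_. 0)"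
    unfolding weak_grad_def using test_fun_facts(4)[OF O] by simp
qed

lemma sigma_of_div0:
  fixes w :: "real^'n::finite \<Rightarrow> real^'n"
  assumes O: "bounded \<Omega>" "open \<Omega>" and w: "H1_0 \<Omega> w Dw" and d: "AE x in lebesgue_on \<Omega>. divg Dw x = 0"
  shows "L2_sigma \<Omega> w"
  unfolding L2_sigma_def
proof (intro conjI allI impI)
  show "L2 \<Omega> w" using w by (simp add: H1_0_def)
  fix q G assume "H1 \<Omega> q G"
  from ibp[OF O w this] have "(\<integral>x. G x \<bullet> w x \<partial>(lebesgue_on \<Omega>)) = - (\<integral>x. q x * divg Dw x \<partial>(lebesgue_on \<Omega>))" .
  also have "(\<integral>x. q x * divg Dw x \<partial>(lebesgue_on \<Omega>)) = 0"
    by (rule integral_eq_zero_AE) (use d in \<open>eventually_elim, simp\<close>)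
  finally show "(\<integral>x. G x \<bullet> w x \<partial>(lebesgue_on \<Omega>)) = 0" by simp
qed

theorem lemma3p2:
  fixes \<Omega> :: "(real^'n::finite) set"
    and \<nu> C :: real
    and f :: "real^'n \<Rightarrow> real^'n"
    and v :: "real^'n \<Rightarrow> real^'n"
    and Dv :: "real^'n \<Rightarrow> real^'n^'n"
    and p :: "real^'n \<Rightarrow> real"
    and g :: "real^'n \<Rightarrow> real^'n"
  assumes dom: "lipschitz_domain \<Omega>" "bounded \<Omega>"
    and nu: "\<nu> > 0"
    and f: "L2 \<Omega> f"
    and v: "H1_0 \<Omega> v Dv"
    and p: "L2_0 \<Omega> p"
    and eq1: "\<forall>w Dw. H1_0 \<Omega> w Dw \<longrightarrow>
       \<nu> * (\<integral>x. Dv x \<bullet> Dw x \<partial>(lebesgue_on \<Omega>)) - (\<integral>x. p x * divg Dw x \<partial>(lebesgue_on \<Omega>))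
         = (\<integral>x. f x \<bullet> w x \<partial>(lebesgue_on \<Omega>))"
    and eq2: "\<forall>q. L2_0 \<Omega> q \<longrightarrow> (\<integral>x. divg Dv x * q x \<partial>(lebesgue_on \<Omega>)) = 0"
    and PF: "\<forall>w Dw. H1_0 \<Omega> w Dw \<longrightarrow> L2norm \<Omega> w \<le> C * L2norm \<Omega> Dw"
    and Pf: "helmholtz_proj \<Omega> f g"
  shows "L2norm \<Omega> Dv \<le> C / \<nu> * L2norm \<Omega> g
    \<and> (\<forall>\<psi> D\<psi>. V0 \<Omega> \<psi> D\<psi> \<longrightarrow>
          - (\<integral>x. Dv x \<bullet> D\<psi> x \<partial>(lebesgue_on \<Omega>))
            = (\<integral>x. (- (1 / \<nu>) *\<^sub>R g x) \<bullet> \<psi> x \<partial>(lebesgue_on \<Omega>)))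
    \<and> C / \<nu> * L2norm \<Omega> g = C * L2norm \<Omega> (\<lambda>x. - (1 / \<nu>) *\<^sub>R g x)"
proof -
  have O: "bounded \<Omega>" "open \<Omega>" "\<Omega> \<noteq> {}" using dom by (auto simp: lipschitz_domain_def)
  let ?L = "lebesgue_on \<Omega>"
  have C0: "C \<ge> 0"
  proof (rule ccontr)
    assume "\<not> C \<ge> 0"
    obtain w Dw where H: "H1_0 \<Omega> w Dw" and pos: "L2norm \<Omega> w > 0" using nonzero_H1_0[OF O] by blast
    have "L2norm \<Omega> w \<le> C * L2norm \<Omega> Dw" using PF H by blast
    moreover have "C * L2norm \<Omega> Dw \<le> 0" using \<open>\<not> C \<ge> 0\<close> L2norm_nonneg[of \<Omega> Dw]
      by (simp add: mult_nonpos_nonneg)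
    ultimately show False using pos by simp
  qed
  have Lv: "L2 \<Omega> v" "L2 \<Omega> Dv" using v by (auto simp: H1_0_def)
  have Lg: "L2 \<Omega> g" using Pf by (simp add: helmholtz_proj_def L2_sigma_def)
  have proj: "\<And>w. L2_sigma \<Omega> w \<Longrightarrow> (\<integral>x. (f x - g x) \<bullet> w x \<partial>?L) = 0"
    using Pf by (simp add: helmholtz_proj_def)
  have fg: "(\<integral>x. f x \<bullet> w x \<partial>?L) = (\<integral>x. g x \<bullet> w x \<partial>?L)" if s: "L2_sigma \<Omega> w" for w
  proof -
    have Lw: "L2 \<Omega> w" using s by (simp add: L2_sigma_def)
    have "0 = (\<integral>x. (f x - g x) \<bullet> w x \<partial>?L)" using proj[OF s] by simp
    also have "\<dots> = (\<integral>x. f x \<bullet> w x \<partial>?L) - (\<integral>x. g x \<bullet> w x \<partial>?L)"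
      using L2_inner_int[OF f Lw] L2_inner_int[OF Lg Lw]
      by (simp add: inner_diff_left Bochner_Integration.integral_diff)
    finally show ?thesis by simp
  qed
  have dmean: "(\<integral>x. divg Dv x \<partial>?L) = 0"
    using ibp[OF O(1,2) v H1_one[OF O(1,2)]] by simp
  have dform: "divg Dv = (\<lambda>x. mat 1 \<bullet> Dv x)" by (rule ext) (rule divg_inner)
  have Ld: "L2 \<Omega> (divg Dv)" unfolding dform by (rule L2_inner_const[OF Lv(2)])
  have "L2_0 \<Omega> (divg Dv)" using Ld dmean by (simp add: L2_0_def)
  then have "(\<integral>x. divg Dv x * divg Dv x \<partial>?L) = 0" using eq2 by blast
  moreover have "integrable ?L (\<lambda>x. divg Dv x * divg Dv x)"
    using L2_inner_int[OF Ld Ld] by (simp add: inner_real_def)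
  ultimately have "AE x in ?L. divg Dv x * divg Dv x = 0"
    by (subst integral_nonneg_eq_0_iff_AE[symmetric]) auto
  then have d0: "AE x in ?L. divg Dv x = 0" by simp
  have sv: "L2_sigma \<Omega> v" by (rule sigma_of_div0[OF O(1,2) v d0])
  have p0: "(\<integral>x. p x * divg Dv x \<partial>?L) = 0"
    by (rule integral_eq_zero_AE) (use d0 in \<open>eventually_elim, simp\<close>)
  have DD: "(\<integral>x. Dv x \<bullet> Dv x \<partial>?L) = (L2norm \<Omega> Dv)\<^sup>2"
    by (simp add: L2norm_sq power2_norm_eq_inner)
  define N where "N = L2norm \<Omega> Dv"
  define Ng where "Ng = L2norm \<Omega> g"
  have N0: "N \<ge> 0" "Ng \<ge> 0" by (simp_all add: N_def Ng_def L2norm_nonneg)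
  have "\<nu> * N\<^sup>2 = (\<integral>x. f x \<bullet> v x \<partial>?L)"
  proof -
    have "\<nu> * (\<integral>x. Dv x \<bullet> Dv x \<partial>?L) - (\<integral>x. p x * divg Dv x \<partial>?L) = (\<integral>x. f x \<bullet> v x \<partial>?L)"
      using eq1 v by blast
    then show ?thesis using p0 DD by (simp add: N_def)
  qed
  also have "\<dots> = (\<integral>x. g x \<bullet> v x \<partial>?L)" by (rule fg[OF sv])
  also have "\<dots> \<le> Ng * L2norm \<Omega> v"
    using L2_CS[OF Lg Lv(1)] by (simp add: Ng_def)
  also have "\<dots> \<le> Ng * (C * N)"
    using PF v N0 by (auto simp: N_def intro!: mult_left_mono)
  finally have ineq: "\<nu> * N\<^sup>2 \<le> Ng * (C * N)" .
  have part1: "N \<le> C / \<nu> * Ng"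
  proof (cases "N = 0")
    case True then show ?thesis using C0 nu N0 by simp
  next
    case False
    then have Np: "N > 0" using N0 by simp
    have "(\<nu> * N) * N \<le> (C * Ng) * N" using ineq by (simp add: power2_eq_square algebra_simps)
    then have "\<nu> * N \<le> C * Ng" using Np by simp
    then show ?thesis using nu by (simp add: field_simps)
  qed
  have part2: "\<forall>\<psi> D\<psi>. V0 \<Omega> \<psi> D\<psi> \<longrightarrow>
          - (\<integral>x. Dv x \<bullet> D\<psi> x \<partial>?L) = (\<integral>x. (- (1 / \<nu>) *\<^sub>R g x) \<bullet> \<psi> x \<partial>?L)"
  proof (intro allI impI)
    fix \<psi> D\<psi> assume V: "V0 \<Omega> \<psi> D\<psi>"
    have H: "H1_0 \<Omega> \<psi> D\<psi>" and dd: "AE x in ?L. divg D\<psi> x = 0" using V by (auto simp: V0_def)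
    have s: "L2_sigma \<Omega> \<psi>" by (rule sigma_of_div0[OF O(1,2) H dd])
    have pp: "(\<integral>x. p x * divg D\<psi> x \<partial>?L) = 0"
      by (rule integral_eq_zero_AE) (use dd in \<open>eventually_elim, simp\<close>)
    have "\<nu> * (\<integral>x. Dv x \<bullet> D\<psi> x \<partial>?L) = (\<integral>x. g x \<bullet> \<psi> x \<partial>?L)"
    proof -
      have "\<nu> * (\<integral>x. Dv x \<bullet> D\<psi> x \<partial>?L) - (\<integral>x. p x * divg D\<psi> x \<partial>?L) = (\<integral>x. f x \<bullet> \<psi> x \<partial>?L)"
        using eq1 H by blast
      then show ?thesis using pp fg[OF s] by simp
    qed
    moreover have "(\<integral>x. (- (1 / \<nu>) *\<^sub>R g x) \<bullet> \<psi> x \<partial>?L) = - (1 / \<nu>) * (\<integral>x. g x \<bullet> \<psi> x \<partial>?L)"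
      by simp
    ultimately show "- (\<integral>x. Dv x \<bullet> D\<psi> x \<partial>?L) = (\<integral>x. (- (1 / \<nu>) *\<^sub>R g x) \<bullet> \<psi> x \<partial>?L)"
      using nu by (simp add: field_simps)
  qed
  have part3: "C / \<nu> * L2norm \<Omega> g = C * L2norm \<Omega> (\<lambda>x. - (1 / \<nu>) *\<^sub>R g x)"
    using L2_scale(2)[OF Lg, of "- (1 / \<nu>)"] nu by simp
  show ?thesis using part1 part2 part3 by (simp add: N_def Ng_def)
qed
end
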